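(* Let $W$ be a binary-input channel and define recursively $L_0=R_0=W$ and, for $n=0,1,2,\dots$, $L_{n+1}=(L_n,R_n)^-$ and $R_{n+1}=(L_n,R_n)^+$. Then the limits $I(L_\infty):=\lim_{n\to\infty}I(L_n)$ and $I(R_\infty):=\lim_{n\to\infty}I(R_n)$ exist, and: (i) if $I(W)\ge 1/2$, then $I(L_\infty)=2I(W)-1$ and $I(R_\infty)=1$; (ii) if $I(W)\le 1/2$, then $I(L_\infty)=0$ and $I(R_\infty)=2I(W)$.
   Context: A binary-input channel $W\colon\{0,1\}\to\mathcal{Y}$ is a family of transition probabilities $W(y\mid x)$ on a discrete output alphabet $\mathcal{Y}$. Its symmetric capacity $I(W)$ is the mutual information (in bits) $I(X;Y)$ between a uniformly distributed input $X\in\{0,1\}$ and the corresponding output $Y$. For binary-input channels $W\colon\{0,1\}\to\mathcal{Y}$ and $V\colon\{0,1\}\to\mathcal{Z}$ define the binary-input channels $(W,V)^-\colon\{0,1\}\to\mathcal{Y}\times\mathcal{Z}$ and $(W,V)^+\colon\{0,1\}\to\mathcal{Y}\times\mathcal{Z}\times\{0,1\}$ by $(W,V)^-(y,z\mid x)=\sum_{u\in\{0,1\}}\tfrac12 W(y\mid u+x)V(z\mid u)$ and $(W,V)^+(y,z,u\mid x)=\tfrac12 W(y\mid u+x)V(z\mid x)$, where addition is modulo 2. *)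

theory Defs
  imports "HOL-Analysis.Analysis"
begin

text \<open>Inputs {0,1} are encoded as bool (False = 0, True = 1); addition modulo 2 of
 u and x is (u \<noteq> x).  A channel is a family of transition probabilities W x y = W(y|x).\<close>

type_synonym 'o channel = "bool \<Rightarrow> 'o \<Rightarrow> real"

definition is_channel :: "'o channel \<Rightarrow> bool" where
  "is_channel W \<longleftrightarrow> (\<forall>x y. 0 \<le> W x y) \<and> (\<forall>x. (W x has_sum 1) UNIV)"

definition sym_cap :: "'o channel \<Rightarrow> real" where
  "sym_cap W = (\<Sum>\<^sub>\<infinity>y. \<Sum>x\<in>UNIV. (1/2) * W x y *
      (if W x y = 0 then 0 else log 2 (W x y / ((1/2) * W False y + (1/2) * W True y))))"

text \<open>A single output type closed under the channel combining operations:
 outputs of (W,V)^- are pairs (y,z), outputs of (W,V)^+ are triples (y,z,u).\<close>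
datatype 'y out = Base 'y | MinusOut "'y out" "'y out" | PlusOut "'y out" "'y out" bool

definition lift_chan :: "'y channel \<Rightarrow> 'y out channel" where
  "lift_chan W = (\<lambda>x w. case w of Base y \<Rightarrow> W x y | _ \<Rightarrow> 0)"

definition chan_minus :: "'y out channel \<Rightarrow> 'y out channel \<Rightarrow> 'y out channel" where
  "chan_minus W V = (\<lambda>x w. case w of
      MinusOut y z \<Rightarrow> (\<Sum>u\<in>UNIV. (1/2) * W (u \<noteq> x) y * V u z) | _ \<Rightarrow> 0)"

definition chan_plus :: "'y out channel \<Rightarrow> 'y out channel \<Rightarrow> 'y out channel" where
  "chan_plus W V = (\<lambda>x w. case w of
      PlusOut y z u \<Rightarrow> (1/2) * W (u \<noteq> x) y * V x z | _ \<Rightarrow> 0)"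

fun LR :: "'y channel \<Rightarrow> nat \<Rightarrow> 'y out channel \<times> 'y out channel" where
  "LR W 0 = (lift_chan W, lift_chan W)"
| "LR W (Suc n) = (case LR W n of (L, R) \<Rightarrow> (chan_minus L R, chan_plus L R))"

end

theory Submission
  imports Defs
begin


definition phi :: "real \<Rightarrow> real" where "phi t = t * log 2 t"
definition tm :: "real \<Rightarrow> real \<Rightarrow> real" where
  "tm p r = (phi p + phi r)/2 - phi ((p+r)/2)"

lemma mlog_div: assumes "a \<ge> 0" "m > 0" shows "a * log 2 (a/m) = phi a - a * log 2 m"
proof (cases "a = 0")
  case True then show ?thesis by (simp add: phi_def)
next
  case False then have "a > 0" using assms by simp
  then show ?thesis using assms by (simp add: phi_def log_divide algebra_simps)
qed

lemma tm_alt: assumes "p \<ge> 0" "r \<ge> 0" "p + r > 0"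
  shows "tm p r = (p * log 2 (p/((p+r)/2)) + r * log 2 (r/((p+r)/2)))/2"
proof -
  have m: "(p+r)/2 > 0" using assms by simp
  show ?thesis unfolding tm_def
    using mlog_div[OF assms(1) m] mlog_div[OF assms(2) m]
    by (simp add: phi_def algebra_simps add_divide_distrib)
qed

lemma tm_00[simp]: "tm 0 0 = 0" by (simp add: tm_def phi_def)

lemma sym_term: assumes "p \<ge> 0" "r \<ge> 0"
  shows "(1/2) * p * (if p = 0 then 0 else log 2 (p / ((1/2)*p + (1/2)*r))) +
         (1/2) * r * (if r = 0 then 0 else log 2 (r / ((1/2)*p + (1/2)*r))) = tm p r"
proof (cases "p + r = 0")
  case True then have "p = 0" "r = 0" using assms by auto
  then show ?thesis by simp
next
  case False then have pr: "p + r > 0" using assms by simp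
  have e: "(1/2)*p + (1/2)*r = (p+r)/2" by simp
  show ?thesis unfolding e tm_alt[OF assms pr] by (simp add: field_simps)
qed

lemma ln_lower: fixes a m :: real assumes "a \<ge> 0" "m > 0" shows "a * ln (a/m) \<ge> a - m"
proof (cases "a = 0")
  case True then show ?thesis using assms by simp
next
  case False then have a: "a > 0" using assms by simp
  have "ln (m/a) \<le> m/a - 1" using a assms by (intro ln_le_minus_one) auto
  moreover have "ln (a/m) = - ln (m/a)" using a assms by (simp add: ln_div)
  ultimately have "ln (a/m) \<ge> 1 - m/a" by simp
  then have "a * ln (a/m) \<ge> a * (1 - m/a)" using a by (intro mult_left_mono) auto
  moreover have "a * (1 - m/a) = a - m" using a by (simp add: field_simps)
  ultimately show ?thesis by linarith
qed

lemma ln_upper: fixes a m :: real assumes "a \<ge> 0" "m > 0" shows "a * ln (a/m) \<le> a * (a/m - 1)"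
proof (cases "a = 0")
  case True then show ?thesis by simp
next
  case False then have a: "a > 0" using assms by simp
  have "ln (a/m) \<le> a/m - 1" using a assms by (intro ln_le_minus_one) auto
  then show ?thesis using a by (intro mult_left_mono) auto
qed

lemma ln_sqrt: fixes x :: real assumes "x \<ge> 0" shows "ln (1 + x) \<le> 2 * sqrt x"
proof -
  have "1 + x \<le> (1 + sqrt x)^2" using assms by (simp add: power2_eq_square algebra_simps)
  then have "ln (1+x) \<le> ln ((1 + sqrt x)^2)" using assms by (intro ln_mono) auto
  also have "\<dots> = 2 * ln (1 + sqrt x)" using assms by (simp add: ln_realpow)
  also have "\<dots> \<le> 2 * sqrt x" using assms ln_add_one_self_le_self[of "sqrt x"] by simp
  finally show ?thesis .
qed

lemma ln_sqrt2: fixes a b :: real assumes "a \<ge> 0" "b \<ge> 0" shows "a * ln ((a+b)/a) \<le> 2 * sqrt (a*b)"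
proof (cases "a = 0")
  case True then show ?thesis by simp
next
  case False then have a: "a > 0" using assms by simp
  have eq: "a * sqrt (b/a) = sqrt (a*b)"
  proof -
    have "a = sqrt a * sqrt a" using a by simp
    then have "a * sqrt (b/a) = sqrt a * (sqrt a * sqrt (b/a))" by (metis mult.assoc)
    also have "sqrt a * sqrt (b/a) = sqrt b" using a by (simp add: real_sqrt_mult[symmetric])
    finally show ?thesis by (simp add: real_sqrt_mult)
  qed
  have "(a+b)/a = 1 + b/a" using a by (simp add: field_simps)
  then have "a * ln ((a+b)/a) \<le> a * (2 * sqrt (b/a))"
    using ln_sqrt[of "b/a"] a assms by (intro mult_left_mono) auto
  also have "\<dots> = 2 * sqrt (a*b)" using eq by simp
  finally show ?thesis .
qed

lemma ln_ge0': fixes a b :: real assumes "a \<ge> 0" "b \<ge> 0" shows "a * ln ((a+b)/a) \<ge> 0"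
proof (cases "a = 0")
  case True then show ?thesis by simp
next
  case False then have a: "a > 0" using assms by simp
  then have "(a+b)/a \<ge> 1" using assms by (simp add: field_simps)
  then show ?thesis using a by simp
qed

lemma ln_two_sub: fixes a m :: real assumes "a \<ge> 0" "m > 0"
  shows "a * ln 2 - a * ln (a/m) = a * ln ((2*m)/a)"
proof (cases "a = 0")
  case True then show ?thesis by simp
next
  case False then have a: "a > 0" using assms by simp
  then show ?thesis using assms by (simp add: ln_div ln_mult algebra_simps)
qed

lemma tm_ln: fixes p r :: real assumes "p \<ge> 0" "r \<ge> 0" "p + r > 0"
  shows "2 * ln 2 * tm p r = p * ln (p/((p+r)/2)) + r * ln (r/((p+r)/2))"
  unfolding tm_alt[OF assms] log_def by (simp add: field_simps)

lemma four_div: fixes Y :: real shows "(4*Y)/(2*ln 2) = (2/ln 2)*Y" by simp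

lemma sq_bound: fixes p r :: real assumes "p \<ge> 0" "r \<ge> 0" "p + r > 0"
  shows "(p - r)^2 / (p + r) \<le> 2 * (p + r - 2 * sqrt (p*r))"
proof -
  define a where "a = sqrt p"
  define b where "b = sqrt r"
  have pa: "p = a^2" "r = b^2" "sqrt (p*r) = a*b"
    using assms(1,2) by (simp_all add: a_def b_def real_sqrt_mult)
  have ab: "a \<ge> 0" "b \<ge> 0" using assms by (auto simp: a_def b_def)
  have "(p - r)^2 = (a-b)^2 * (a+b)^2" unfolding pa by (simp add: power2_eq_square algebra_simps)
  also have "\<dots> \<le> (a-b)^2 * (2*(a^2+b^2))"
  proof (intro mult_left_mono)
    have "0 \<le> (a-b)^2" by simp
    then show "(a+b)^2 \<le> 2*(a^2+b^2)" by (simp add: power2_eq_square algebra_simps)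
  qed simp
  finally have 1: "(p - r)^2 \<le> (a-b)^2 * (2*(a^2+b^2))" .
  have "2 * (p + r - 2 * sqrt (p*r)) * (p + r) = 2*(a^2+b^2-2*(a*b))*(a^2+b^2)"
    by (simp only: pa(3)) (simp add: pa(1,2))
  also have "\<dots> = (a-b)^2 * (2*(a^2+b^2))" by (simp add: power2_eq_square algebra_simps)
  finally have "(p - r)^2 \<le> 2 * (p + r - 2 * sqrt (p*r)) * (p + r)" using 1 by simp
  then show ?thesis using assms by (simp add: divide_le_eq)
qed

lemma tm_nonneg: fixes p r :: real assumes "p \<ge> 0" "r \<ge> 0" shows "0 \<le> tm p r"
proof (cases "p + r = 0")
  case True then have "p = 0" "r = 0" using assms by auto
  then show ?thesis by simp
next
  case False then have pr: "p + r > 0" using assms by simp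
  have m: "(p+r)/2 > 0" using pr by simp
  have "p * ln (p/((p+r)/2)) + r * ln (r/((p+r)/2)) \<ge> (p - (p+r)/2) + (r - (p+r)/2)"
    using ln_lower[OF assms(1) m] ln_lower[OF assms(2) m] by linarith
  then have "2 * ln 2 * tm p r \<ge> 0" unfolding tm_ln[OF assms pr] by simp
  then show ?thesis by (simp add: zero_le_mult_iff)
qed

lemma tm_Z2: fixes p r :: real assumes "p \<ge> 0" "r \<ge> 0"
  shows "tm p r \<le> (2 / ln 2) * ((p+r)/2 - sqrt (p*r))"
proof (cases "p + r = 0")
  case True then have "p = 0" "r = 0" using assms by auto
  then show ?thesis by simp
next
  case False then have pr: "p + r > 0" using assms by simp
  have m: "(p+r)/2 > 0" using pr by simp
  have "p * ln (p/((p+r)/2)) + r * ln (r/((p+r)/2)) \<le> p * (p/((p+r)/2) - 1) + r * (r/((p+r)/2) - 1)"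
    using ln_upper[OF assms(1) m] ln_upper[OF assms(2) m] by linarith
  also have "\<dots> = (2*p*p + 2*r*r)/(p+r) - (p+r)"
    by (simp only: divide_divide_eq_right) (simp add: algebra_simps add_divide_distrib)
  also have "\<dots> = (2*p*p + 2*r*r - (p+r)*(p+r))/(p+r)" using pr by (simp add: diff_divide_distrib)
  also have "(2*p*p + 2*r*r - (p+r)*(p+r))/(p+r) = (p-r)^2/(p+r)" by (simp add: power2_eq_square algebra_simps)
  also have "\<dots> \<le> 2 * (p + r - 2 * sqrt (p*r))" by (rule sq_bound[OF assms pr])
  finally have "2 * ln 2 * tm p r \<le> 2 * (p + r - 2 * sqrt (p*r))" unfolding tm_ln[OF assms pr] .
  moreover have "2 * (p + r - 2 * sqrt (p*r)) = 4 * ((p+r)/2 - sqrt (p*r))" by simp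
  ultimately have "2 * ln 2 * tm p r \<le> 4 * ((p+r)/2 - sqrt (p*r))" by linarith
  then have "tm p r \<le> (4 * ((p+r)/2 - sqrt (p*r))) / (2 * ln 2)" by (simp add: le_divide_eq mult.commute)
  then show ?thesis by (simp only: four_div)
qed

lemma tm_Z1: fixes p r :: real assumes "p \<ge> 0" "r \<ge> 0"
  shows "(p+r)/2 - tm p r \<le> (2 / ln 2) * sqrt (p*r)" and "tm p r \<le> (p+r)/2"
proof -
  have "(p+r)/2 - tm p r \<le> (2 / ln 2) * sqrt (p*r) \<and> tm p r \<le> (p+r)/2"
  proof (cases "p + r = 0")
    case True then have "p = 0" "r = 0" using assms by auto
    then show ?thesis by simp
  next
    case False then have pr: "p + r > 0" using assms by simp
    have m: "(p+r)/2 > 0" using pr by simp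
    have e: "2 * ((p+r)/2) = p + r" by simp
    have h1: "p * ln 2 - p * ln (p/((p+r)/2)) = p * ln ((p+r)/p)"
      using ln_two_sub[OF assms(1) m] by (simp only: e)
    have h2: "r * ln 2 - r * ln (r/((p+r)/2)) = r * ln ((r+p)/r)"
      using ln_two_sub[OF assms(2) m] by (simp only: e add.commute)
    have "(p + r) * ln 2 = p * ln 2 + r * ln 2" by (simp add: distrib_right)
    then have "(p + r) * ln 2 - 2 * ln 2 * tm p r = p * ln ((p+r)/p) + r * ln ((r+p)/r)"
      unfolding tm_ln[OF assms pr] using h1 h2 by linarith
    moreover have "p * ln ((p+r)/p) + r * ln ((r+p)/r) \<le> 4 * sqrt (p*r)"
      using ln_sqrt2[OF assms(1,2)] ln_sqrt2[OF assms(2,1)] by (simp add: mult.commute)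
    moreover have "p * ln ((p+r)/p) + r * ln ((r+p)/r) \<ge> 0"
      using ln_ge0'[OF assms(1,2)] ln_ge0'[OF assms(2,1)] by simp
    ultimately have "2 * ln 2 * ((p+r)/2 - tm p r) \<le> 4 * sqrt (p*r)"
         "2 * ln 2 * ((p+r)/2 - tm p r) \<ge> 0" by (simp_all add: algebra_simps)
    then have "(p+r)/2 - tm p r \<le> (4 * sqrt (p*r)) / (2 * ln 2)" "0 \<le> (p+r)/2 - tm p r"
      by (simp_all add: le_divide_eq mult.commute zero_le_mult_iff)
    then show ?thesis by simp
  qed
  then show "(p+r)/2 - tm p r \<le> (2 / ln 2) * sqrt (p*r)" "tm p r \<le> (p+r)/2" by auto
qed

lemma sqrt_amgm: fixes p r :: real assumes "p \<ge> 0" "r \<ge> 0" shows "sqrt (p*r) \<le> (p+r)/2"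
  using arith_geo_mean_sqrt[OF assms] by simp

lemma phi_mult: fixes a b :: real assumes "a \<ge> 0" "b \<ge> 0" shows "phi (a*b) = a * phi b + b * phi a"
proof (cases "a = 0 \<or> b = 0")
  case True then show ?thesis by (auto simp: phi_def)
next
  case False then have "a > 0" "b > 0" using assms by auto
  then show ?thesis by (simp add: phi_def log_mult algebra_simps)
qed

lemma phi_half: fixes x :: real assumes "x \<ge> 0" shows "phi (x/2) = (phi x - x)/2"
proof (cases "x = 0")
  case True then show ?thesis by (simp add: phi_def)
next
  case False then have "x > 0" using assms by auto
  then show ?thesis by (simp add: phi_def log_divide algebra_simps)
qed

lemma chain_id: fixes p r v t :: real assumes "p \<ge> 0" "r \<ge> 0" "v \<ge> 0" "t \<ge> 0"
  shows "tm ((p * v+r*t)/2) ((r * v+p*t)/2) + tm (p * v/2) (r*t/2) + tm (r * v/2) (p*t/2)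
       = ((v+t)/2) * tm p r + ((p+r)/2) * tm v t"
proof -
  have e1: "phi (((p * v+r*t)/2 + (r * v+p*t)/2)/2) = ((p+r)/2)*phi((v+t)/2) + ((v+t)/2)*phi((p+r)/2)"
  proof -
    have "((p * v+r*t)/2 + (r * v+p*t)/2)/2 = ((p+r)/2)*((v+t)/2)" by (simp add: field_simps)
    then show ?thesis by (simp only:) (rule phi_mult, use assms in auto)
  qed
  have e2: "phi ((p * v/2 + r*t/2)/2) = (phi ((p * v+r*t)/2) - (p * v+r*t)/2)/2"
  proof -
    have "(p * v/2 + r*t/2)/2 = ((p * v+r*t)/2)/2" by simp
    then show ?thesis by (simp only:) (rule phi_half, use assms in auto)
  qed
  have e3: "phi ((r * v/2 + p*t/2)/2) = (phi ((r * v+p*t)/2) - (r * v+p*t)/2)/2"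
  proof -
    have "(r * v/2 + p*t/2)/2 = ((r * v+p*t)/2)/2" by simp
    then show ?thesis by (simp only:) (rule phi_half, use assms in auto)
  qed
  have h: "\<And>a b. a \<ge> 0 \<Longrightarrow> b \<ge> 0 \<Longrightarrow> phi (a*b/2) = (a * phi b + b * phi a - a*b)/2"
    using phi_half phi_mult by simp
  have e4: "phi (p * v/2) = (p * phi v + v * phi p - p * v)/2" "phi (r*t/2) = (r * phi t + t * phi r - r*t)/2"
     "phi (r * v/2) = (r * phi v + v * phi r - r * v)/2" "phi (p*t/2) = (p * phi t + t * phi p - p*t)/2"
    using h assms by auto
  show ?thesis unfolding tm_def e1 e2 e3 e4 by (simp add: field_simps)
qed



lemma has_sum_prod:
  fixes f :: "'a \<Rightarrow> real" and g :: "'b \<Rightarrow> real"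
  assumes f: "(f has_sum a) UNIV" and g: "(g has_sum b) UNIV"
    and fn: "\<And>x. f x \<ge> 0" and gn: "\<And>y. g y \<ge> 0"
  shows "((\<lambda>(x,y). f x * g y) has_sum (a*b)) UNIV"
proof -
  have inner: "\<And>x. x \<in> UNIV \<Longrightarrow> ((\<lambda>y. (\<lambda>(x,y). f x * g y) (x, y)) has_sum (f x * b)) UNIV"
    using has_sum_cmult_right[OF g] by simp
  have outer: "((\<lambda>x. f x * b) has_sum (a*b)) UNIV" using has_sum_cmult_left[OF f] .
  have summ: "(\<lambda>(x,y). f x * g y) summable_on Sigma UNIV (\<lambda>_. UNIV)"
    by (rule summable_on_SigmaI[OF inner]) (use outer fn gn in \<open>auto simp: summable_on_def\<close>)
  have "((\<lambda>(x,y). f x * g y) has_sum (a*b)) (Sigma UNIV (\<lambda>_. UNIV))"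
    by (rule has_sum_SigmaI[OF inner outer summ])
  then show ?thesis by simp
qed

lemma has_sum_bool_sigma:
  fixes G :: "bool \<Rightarrow> 'b \<Rightarrow> real"
  assumes h: "\<And>u. (G u has_sum s u) UNIV" and nn: "\<And>u v. G u v \<ge> 0"
  shows "((\<lambda>(u,v). G u v) has_sum (s True + s False)) UNIV"
proof -
  have inner: "\<And>u. u \<in> UNIV \<Longrightarrow> ((\<lambda>v. (\<lambda>(u,v). G u v) (u, v)) has_sum s u) UNIV"
    using h by simp
  have outer: "(s has_sum (s True + s False)) UNIV"
    by (rule has_sum_finiteI) (auto simp: UNIV_bool)
  have summ: "(\<lambda>(u,v). G u v) summable_on Sigma UNIV (\<lambda>_. UNIV)"
    by (rule summable_on_SigmaI[OF inner]) (use outer nn in \<open>auto simp: summable_on_def\<close>)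
  have "((\<lambda>(u,v). G u v) has_sum (s True + s False)) (Sigma UNIV (\<lambda>_. UNIV))"
    by (rule has_sum_SigmaI[OF inner outer summ])
  then show ?thesis by simp
qed

lemma has_sum_range:
  assumes "inj h" and "\<And>w. w \<notin> range h \<Longrightarrow> F w = 0"
  shows "(F has_sum s) UNIV \<longleftrightarrow> ((F \<circ> h) has_sum s) UNIV"
proof -
  have "(F has_sum s) UNIV \<longleftrightarrow> (F has_sum s) (range h)"
    by (rule has_sum_cong_neutral) (use assms in auto)
  also have "\<dots> \<longleftrightarrow> ((F \<circ> h) has_sum s) UNIV" by (rule has_sum_reindex) (use assms in auto)
  finally show ?thesis .
qed

lemma sum_bool: fixes f :: "bool \<Rightarrow> real" shows "sum f UNIV = f False + f True"
  by (simp add: UNIV_bool)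

definition mm :: "'o channel \<Rightarrow> 'o \<Rightarrow> real" where "mm W y = (W False y + W True y)/2"
definition tmW :: "'o channel \<Rightarrow> 'o \<Rightarrow> real" where "tmW W y = tm (W False y) (W True y)"
definition zz :: "'o channel \<Rightarrow> 'o \<Rightarrow> real" where "zz W y = sqrt (W False y * W True y)"
definition Zc :: "'o channel \<Rightarrow> real" where "Zc W = infsum (zz W) UNIV"

context
  fixes W :: "'o channel"
  assumes ch: "is_channel W"
begin

lemma ch_nn: "W x y \<ge> 0" using ch by (simp add: is_channel_def)
lemma ch_sum: "(W x has_sum 1) UNIV" using ch by (simp add: is_channel_def)

lemma mm_sum: "(mm W has_sum 1) UNIV"
proof -
  have "((\<lambda>y. (W False y + W True y) * (1/2)) has_sum ((1+1)*(1/2))) UNIV"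
    by (intro has_sum_cmult_left has_sum_add ch_sum)
  then show ?thesis by (simp add: mm_def[abs_def])
qed

lemma tmW_nn: "tmW W y \<ge> 0" unfolding tmW_def by (intro tm_nonneg ch_nn)
lemma tmW_le: "tmW W y \<le> mm W y" unfolding tmW_def mm_def by (intro tm_Z1(2) ch_nn)
lemma zz_nn: "zz W y \<ge> 0" unfolding zz_def using ch_nn by simp
lemma zz_le: "zz W y \<le> mm W y" unfolding zz_def mm_def by (intro sqrt_amgm ch_nn)

lemma tmW_summable: "tmW W summable_on UNIV"
  by (rule summable_on_comparison_test[of "mm W"]) (use mm_sum tmW_nn tmW_le in \<open>auto simp: summable_on_def\<close>)
lemma zz_summable: "zz W summable_on UNIV"
  by (rule summable_on_comparison_test[of "mm W"]) (use mm_sum zz_nn zz_le in \<open>auto simp: summable_on_def\<close>)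

lemma sym_cap_tm: "sym_cap W = infsum (tmW W) UNIV"
  unfolding sym_cap_def tmW_def
  by (rule infsum_cong) (subst sum_bool, rule sym_term[OF ch_nn ch_nn])

lemma pt1: "mm W y \<le> tmW W y + (2 / ln 2) * zz W y"
  using tm_Z1(1)[OF ch_nn[of False y] ch_nn[of True y]] unfolding mm_def tmW_def zz_def by linarith
lemma pt2: "tmW W y + (2 / ln 2) * zz W y \<le> (2 / ln 2) * mm W y"
  using tm_Z2[OF ch_nn[of False y] ch_nn[of True y]]
    right_diff_distrib[of "2 / ln 2" "(W False y + W True y)/2" "sqrt (W False y * W True y)"]
  unfolding mm_def tmW_def zz_def by linarith

lemma sym_cap_has_sum: "(tmW W has_sum sym_cap W) UNIV"
  unfolding sym_cap_tm using tmW_summable by simp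
lemma Zc_has_sum: "(zz W has_sum Zc W) UNIV"
  unfolding Zc_def using zz_summable by simp

lemma cap_bounds: "0 \<le> sym_cap W" "sym_cap W \<le> 1" "0 \<le> Zc W" "Zc W \<le> 1"
  "1 - sym_cap W \<le> (2 / ln 2) * Zc W" "sym_cap W \<le> (2 / ln 2) * (1 - Zc W)"
proof -
  show "0 \<le> sym_cap W" using has_sum_nonneg[OF sym_cap_has_sum] tmW_nn by auto
  show "sym_cap W \<le> 1" using has_sum_mono[OF sym_cap_has_sum mm_sum] tmW_le by auto
  show "0 \<le> Zc W" using has_sum_nonneg[OF Zc_has_sum] zz_nn by auto
  show "Zc W \<le> 1" using has_sum_mono[OF Zc_has_sum mm_sum] zz_le by auto
  have "1 \<le> sym_cap W + (2 / ln 2) * Zc W"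
    by (rule has_sum_mono[OF mm_sum has_sum_add[OF sym_cap_has_sum has_sum_cmult_right[OF Zc_has_sum]]])
       (use pt1 in auto)
  then show "1 - sym_cap W \<le> (2 / ln 2) * Zc W" by simp
  have "sym_cap W + (2 / ln 2) * Zc W \<le> (2 / ln 2) * 1"
    by (rule has_sum_mono[OF has_sum_add[OF sym_cap_has_sum has_sum_cmult_right[OF Zc_has_sum]] has_sum_cmult_right[OF mm_sum]])
       (use pt2 in auto)
  then show "sym_cap W \<le> (2 / ln 2) * (1 - Zc W)"
    using right_diff_distrib[of "2 / ln 2" 1 "Zc W"] by linarith
qed

end



lemma summable_le:
  fixes f g :: "'a \<Rightarrow> real"
  assumes "(g has_sum c) UNIV" "\<And>x. 0 \<le> f x" "\<And>x. f x \<le> g x"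
  shows "(f has_sum infsum f UNIV) UNIV"
proof -
  have "f summable_on UNIV"
    by (rule summable_on_comparison_test[of g]) (use assms in \<open>auto simp: summable_on_def\<close>)
  then show ?thesis by simp
qed

lemma inj_Base: "inj Base" by (auto simp: inj_def)
lemma inj_M: "inj (\<lambda>(y,z). MinusOut y z)" by (auto simp: inj_def)
lemma inj_P: "inj (\<lambda>(u,(y,z)). PlusOut y z u)" by (auto simp: inj_def)

lemma range_Base: "w \<notin> range Base \<Longrightarrow> (\<forall>y. w \<noteq> Base y)" by auto
lemma not_range_M: "w \<notin> range (\<lambda>(y,z). MinusOut y z) \<Longrightarrow> (\<forall>y z. w \<noteq> MinusOut y z)" by auto
lemma not_range_P: "w \<notin> range (\<lambda>(u,(y,z)). PlusOut y z u) \<Longrightarrow> (\<forall>y z u. w \<noteq> PlusOut y z u)"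
proof (intro allI notI)
  fix y z u assume "w \<notin> range (\<lambda>(u,(y,z)). PlusOut y z u)" "w = PlusOut y z u"
  moreover have "PlusOut y z u = (\<lambda>(u,(y,z)). PlusOut y z u) (u,(y,z))" by simp
  ultimately show False by (metis rangeI)
qed

lemma lift_vals[simp]: "lift_chan W x (Base y) = W x y" "lift_chan W x (MinusOut a b) = 0"
  "lift_chan W x (PlusOut a b c) = 0" by (simp_all add: lift_chan_def)

lemma zero_off_Base: "\<forall>y. w \<noteq> Base y \<Longrightarrow> lift_chan W x w = 0"
  by (cases w) auto

lemma lift_channel: assumes "is_channel W" shows "is_channel (lift_chan W)"
  unfolding is_channel_def
proof (intro conjI allI)
  fix x w show "0 \<le> lift_chan W x w" using ch_nn[OF assms] by (cases w) auto
next
  fix x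
  have "(lift_chan W x has_sum 1) UNIV \<longleftrightarrow> ((lift_chan W x \<circ> Base) has_sum 1) UNIV"
    by (rule has_sum_range[OF inj_Base]) (auto intro: zero_off_Base)
  moreover have "lift_chan W x \<circ> Base = W x" by (auto simp: fun_eq_iff)
  ultimately show "(lift_chan W x has_sum 1) UNIV" using ch_sum[OF assms] by simp
qed

lemma lift_cap: assumes "is_channel W" shows "sym_cap (lift_chan W) = sym_cap W"
proof -
  have "(tmW (lift_chan W) has_sum sym_cap W) UNIV \<longleftrightarrow> ((tmW (lift_chan W) \<circ> Base) has_sum sym_cap W) UNIV"
    by (rule has_sum_range[OF inj_Base]) (auto dest!: range_Base simp: tmW_def zero_off_Base)
  moreover have "tmW (lift_chan W) \<circ> Base = tmW W" by (auto simp: fun_eq_iff tmW_def)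
  ultimately have "(tmW (lift_chan W) has_sum sym_cap W) UNIV" using sym_cap_has_sum[OF assms] by simp
  then show ?thesis using sym_cap_has_sum[OF lift_channel[OF assms]] has_sum_unique by blast
qed

lemma minus_vals: "chan_minus W V x (MinusOut y z) = (1/2) * W (False \<noteq> x) y * V False z + (1/2) * W (True \<noteq> x) y * V True z"
  by (simp add: chan_minus_def sum_bool)
lemma minus_zero: "\<forall>y z. w \<noteq> MinusOut y z \<Longrightarrow> chan_minus W V x w = 0"
  by (cases w) (auto simp: chan_minus_def)
lemma plus_vals: "chan_plus W V x (PlusOut y z u) = (1/2) * W (u \<noteq> x) y * V x z"
  by (simp add: chan_plus_def)
lemma plus_zero: "\<forall>y z u. w \<noteq> PlusOut y z u \<Longrightarrow> chan_plus W V x w = 0"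
  by (cases w) (auto simp: chan_plus_def)

context
  fixes W V :: "'o out channel"
  assumes chW: "is_channel W" and chV: "is_channel V"
begin

lemma prod1: "((\<lambda>(y,z). W a y * V b z) has_sum 1) UNIV"
  using has_sum_prod[OF ch_sum[OF chW, of a] ch_sum[OF chV, of b] ch_nn[OF chW] ch_nn[OF chV]] by simp

lemma minus_channel: "is_channel (chan_minus W V)"
  unfolding is_channel_def
proof (intro conjI allI)
  fix x w show "0 \<le> chan_minus W V x w"
    using ch_nn[OF chW] ch_nn[OF chV] by (cases w) (auto simp: chan_minus_def intro!: sum_nonneg)
next
  fix x
  have "(chan_minus W V x has_sum 1) UNIV \<longleftrightarrow> ((chan_minus W V x \<circ> (\<lambda>(y,z). MinusOut y z)) has_sum 1) UNIV"
    by (rule has_sum_range[OF inj_M]) (auto dest!: not_range_M intro: minus_zero)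
  moreover have "((chan_minus W V x \<circ> (\<lambda>(y,z). MinusOut y z)) has_sum (1/2 * 1 + 1/2 * 1)) UNIV"
  proof -
    have "((\<lambda>p. 1/2 * (\<lambda>(y,z). W (False \<noteq> x) y * V False z) p + 1/2 * (\<lambda>(y,z). W (True \<noteq> x) y * V True z) p)
        has_sum (1/2 * 1 + 1/2 * 1)) UNIV"
      by (intro has_sum_add has_sum_cmult_right prod1)
    then show ?thesis by (rule has_sum_cong[THEN iffD1, rotated]) (auto simp: minus_vals)
  qed
  ultimately show "(chan_minus W V x has_sum 1) UNIV" by simp
qed

lemma plus_channel: "is_channel (chan_plus W V)"
  unfolding is_channel_def
proof (intro conjI allI)
  fix x w show "0 \<le> chan_plus W V x w"
    using ch_nn[OF chW] ch_nn[OF chV] by (cases w) (auto simp: chan_plus_def)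
next
  fix x
  have "(chan_plus W V x has_sum 1) UNIV \<longleftrightarrow> ((chan_plus W V x \<circ> (\<lambda>(u,(y,z)). PlusOut y z u)) has_sum 1) UNIV"
    by (rule has_sum_range[OF inj_P]) (auto dest!: not_range_P intro: plus_zero)
  moreover have "((chan_plus W V x \<circ> (\<lambda>(u,(y,z)). PlusOut y z u)) has_sum (1/2 * 1 + 1/2 * 1)) UNIV"
  proof -
    have hu: "\<And>u. ((\<lambda>p. 1/2 * (\<lambda>(y,z). W (u \<noteq> x) y * V x z) p) has_sum (1/2 * 1)) UNIV"
      by (rule has_sum_cmult_right, rule prod1)
    have "((\<lambda>(u,v). (\<lambda>u p. 1/2 * (\<lambda>(y,z). W (u \<noteq> x) y * V x z) p) u v) has_sum (1/2 * 1 + 1/2 * 1)) UNIV"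
      by (rule has_sum_bool_sigma[where s="\<lambda>_. 1/2 * 1", OF hu])
         (auto intro!: mult_nonneg_nonneg ch_nn[OF chW] ch_nn[OF chV])
    then show ?thesis by (rule has_sum_cong[THEN iffD1, rotated]) (auto simp: plus_vals)
  qed
  ultimately show "(chan_plus W V x has_sum 1) UNIV" by simp
qed


lemma sqrt_quarter: fixes a b c d :: real assumes "a \<ge> 0" "b \<ge> 0" "c \<ge> 0" "d \<ge> 0"
  shows "sqrt ((1/2)*a*b*((1/2)*c*d)) = 1/2 * (sqrt (a*c) * sqrt (b*d))"
proof -
  have e: "(1/2)*a*b*((1/2)*c*d) = (1/2)^2 * ((a*c)*(b*d))" by (simp add: power2_eq_square algebra_simps)
  have "sqrt ((1/2)*a*b*((1/2)*c*d)) = sqrt ((1/2)^2 * ((a*c)*(b*d)))" by (rule arg_cong[where f=sqrt], rule e)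
  also have "\<dots> = sqrt ((1/2)^2) * (sqrt (a*c) * sqrt (b*d))"
    by (simp only: real_sqrt_mult)
  also have "sqrt ((1/2::real)^2) = 1/2" by simp
  finally show ?thesis .
qed

lemma Z_plus: "Zc (chan_plus W V) = Zc W * Zc V"
proof -
  have pw: "\<And>u y z. zz (chan_plus W V) (PlusOut y z u) = 1/2 * (zz W y * zz V z)"
  proof -
    fix u y z
    show "zz (chan_plus W V) (PlusOut y z u) = 1/2 * (zz W y * zz V z)"
      using sqrt_quarter[OF ch_nn[OF chW, of u y] ch_nn[OF chV, of False z] ch_nn[OF chW, of "\<not>u" y] ch_nn[OF chV, of True z]]
      by (cases u) (simp_all add: zz_def plus_vals mult.commute)
  qed
  have hu: "((\<lambda>q. 1/2 * (\<lambda>(y,z). zz W y * zz V z) q) has_sum (1/2 * (Zc W * Zc V))) UNIV"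
    by (rule has_sum_cmult_right, rule has_sum_prod[OF Zc_has_sum[OF chW] Zc_has_sum[OF chV] zz_nn[OF chW] zz_nn[OF chV]])
  have "((\<lambda>(u::bool,v). (\<lambda>u q. 1/2 * (\<lambda>(y,z). zz W y * zz V z) q) u v) has_sum
         (1/2 * (Zc W * Zc V) + 1/2 * (Zc W * Zc V))) UNIV"
    by (rule has_sum_bool_sigma[where s="\<lambda>_. 1/2 * (Zc W * Zc V)" and G="\<lambda>u q. 1/2 * (\<lambda>(y,z). zz W y * zz V z) q", OF hu])
       (auto intro!: mult_nonneg_nonneg zz_nn[OF chW] zz_nn[OF chV])
  moreover have "(\<lambda>(u::bool,v). (\<lambda>u q. 1/2 * (\<lambda>(y,z). zz W y * zz V z) q) u v) = zz (chan_plus W V) \<circ> (\<lambda>(u,(y,z)). PlusOut y z u)"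
    by (auto simp: fun_eq_iff pw)
  ultimately have "(zz (chan_plus W V) \<circ> (\<lambda>(u,(y,z)). PlusOut y z u) has_sum (Zc W * Zc V)) UNIV" by (simp add: mult.commute)
  moreover have "(zz (chan_plus W V) has_sum (Zc W * Zc V)) UNIV \<longleftrightarrow> (zz (chan_plus W V) \<circ> (\<lambda>(u,(y,z)). PlusOut y z u) has_sum (Zc W * Zc V)) UNIV"
    by (rule has_sum_range[OF inj_P]) (auto dest!: not_range_P simp: zz_def plus_zero)
  ultimately show ?thesis using Zc_has_sum[OF plus_channel] has_sum_unique by blast
qed

end

lemma cross: fixes p r v t :: real assumes "p \<ge> 0" "r \<ge> 0" "v \<ge> 0" "t \<ge> 0"
  shows "(p * v + r*t)/2/2 \<le> (p+r)/2*((v+t)/2)" "(r * v + p*t)/2/2 \<le> (p+r)/2*((v+t)/2)"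
proof -
  have "(p+r)*(v+t) = p * v + r*t + (p*t + r * v)" by (simp add: algebra_simps)
  moreover have "p*t \<ge> 0" "r * v \<ge> 0" "p * v \<ge> 0" "r*t \<ge> 0" using assms by auto
  ultimately show "(p * v + r*t)/2/2 \<le> (p+r)/2*((v+t)/2)" "(r * v + p*t)/2/2 \<le> (p+r)/2*((v+t)/2)" by auto
qed



context
  fixes W V :: "'o out channel"
  assumes chW: "is_channel W" and chV: "is_channel V"
begin

lemma chain_rule: "sym_cap (chan_minus W V) + sym_cap (chan_plus W V) = sym_cap W + sym_cap V"
proof -
  define Mp where "Mp = (\<lambda>(y,z). mm W y * mm V z)"
  have Mp_sum: "(Mp has_sum 1) UNIV"
    using has_sum_prod[OF mm_sum[OF chW] mm_sum[OF chV]] mm_def ch_nn[OF chW] ch_nn[OF chV]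
    unfolding Mp_def by (simp add: mm_def)
  define A where "A = (\<lambda>(y,z). tmW (chan_minus W V) (MinusOut y z))"
  define G where "G = (\<lambda>u (y,z). tmW (chan_plus W V) (PlusOut y z u))"
  have mmM: "mm (chan_minus W V) (MinusOut y z) = mm W y * mm V z" for y z
    by (simp add: mm_def minus_vals algebra_simps)
  have A_le: "0 \<le> A q \<and> A q \<le> Mp q" for q
  proof -
    obtain y z where q: "q = (y,z)" by (cases q)
    show ?thesis
      using tmW_nn[OF minus_channel[OF chW chV]] tmW_le[OF minus_channel[OF chW chV], of "MinusOut y z"] mmM[of y z]
      by (simp add: A_def Mp_def q)
  qed
  have G_le: "0 \<le> G u q \<and> G u q \<le> Mp q" for u q
  proof -
    obtain y z where q: "q = (y,z)" by (cases q)
    let ?p = "W False y" and ?r = "W True y" and ?v = "V False z" and ?t = "V True z"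
    have "mm (chan_plus W V) (PlusOut y z u) \<le> mm W y * mm V z"
      using cross[OF ch_nn[OF chW, of False y] ch_nn[OF chW, of True y] ch_nn[OF chV, of False z] ch_nn[OF chV, of True z]]
      by (cases u) (simp_all add: mm_def plus_vals algebra_simps add_divide_distrib)
    then show ?thesis
      using tmW_nn[OF plus_channel[OF chW chV]] tmW_le[OF plus_channel[OF chW chV], of "PlusOut y z u"]
      by (simp add: G_def Mp_def q)
  qed
  have A_sum: "(A has_sum infsum A UNIV) UNIV"
    by (rule summable_le[OF Mp_sum]) (use A_le in auto)
  have G_sum: "(G u has_sum infsum (G u) UNIV) UNIV" for u
    by (rule summable_le[OF Mp_sum]) (use G_le in auto)
  have capM: "sym_cap (chan_minus W V) = infsum A UNIV"
  proof -
    have "(tmW (chan_minus W V) has_sum infsum A UNIV) UNIV \<longleftrightarrow> ((tmW (chan_minus W V) \<circ> (\<lambda>(y,z). MinusOut y z)) has_sum infsum A UNIV) UNIV"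
      by (rule has_sum_range[OF inj_M]) (auto dest!: not_range_M simp: tmW_def minus_zero)
    moreover have "tmW (chan_minus W V) \<circ> (\<lambda>(y,z). MinusOut y z) = A" by (auto simp: A_def fun_eq_iff)
    ultimately show ?thesis using A_sum sym_cap_has_sum[OF minus_channel[OF chW chV]] has_sum_unique by metis
  qed
  have capP: "sym_cap (chan_plus W V) = infsum (G True) UNIV + infsum (G False) UNIV"
  proof -
    let ?s = "infsum (G True) UNIV + infsum (G False) UNIV"
    have "((\<lambda>(u,v). G u v) has_sum ?s) UNIV"
      by (rule has_sum_bool_sigma[OF G_sum]) (use G_le in auto)
    moreover have "(\<lambda>(u,v). G u v) = tmW (chan_plus W V) \<circ> (\<lambda>(u,(y,z)). PlusOut y z u)"
      by (auto simp: G_def fun_eq_iff)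
    moreover have "(tmW (chan_plus W V) has_sum ?s) UNIV \<longleftrightarrow> ((tmW (chan_plus W V) \<circ> (\<lambda>(u,(y,z)). PlusOut y z u)) has_sum ?s) UNIV"
      by (rule has_sum_range[OF inj_P]) (auto dest!: not_range_P simp: tmW_def plus_zero)
    ultimately show ?thesis using sym_cap_has_sum[OF plus_channel[OF chW chV]] has_sum_unique by metis
  qed
  have pw: "A q + G False q + G True q = (\<lambda>(y,z). tmW W y * mm V z + mm W y * tmW V z) q" for q
  proof -
    obtain y z where q: "q = (y,z)" by (cases q)
    let ?p = "W False y" and ?r = "W True y" and ?v = "V False z" and ?t = "V True z"
    have e1: "chan_minus W V False (MinusOut y z) = (?p * ?v + ?r * ?t)/2"
      "chan_minus W V True (MinusOut y z) = (?r * ?v + ?p * ?t)/2"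
      "chan_plus W V False (PlusOut y z False) = ?p * ?v/2"
      "chan_plus W V True (PlusOut y z False) = ?r * ?t/2"
      "chan_plus W V False (PlusOut y z True) = ?r * ?v/2"
      "chan_plus W V True (PlusOut y z True) = ?p * ?t/2"
      by (simp_all add: minus_vals plus_vals)
    show ?thesis
      using chain_id[OF ch_nn[OF chW, of False y] ch_nn[OF chW, of True y] ch_nn[OF chV, of False z] ch_nn[OF chV, of True z]]
      unfolding A_def G_def q tmW_def mm_def by (simp add: e1 algebra_simps)
  qed
  have "((\<lambda>q. A q + G False q + G True q) has_sum (infsum A UNIV + infsum (G False) UNIV + infsum (G True) UNIV)) UNIV"
    by (intro has_sum_add A_sum G_sum)
  moreover have "((\<lambda>(y,z). tmW W y * mm V z + mm W y * tmW V z) has_sum (sym_cap W * 1 + 1 * sym_cap V)) UNIV"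
  proof -
    have "((\<lambda>q. (\<lambda>(y,z). tmW W y * mm V z) q + (\<lambda>(y,z). mm W y * tmW V z) q) has_sum (sym_cap W * 1 + 1 * sym_cap V)) UNIV"
      by (intro has_sum_add has_sum_prod sym_cap_has_sum mm_sum chW chV tmW_nn)
         (auto simp: mm_def intro: add_nonneg_nonneg ch_nn[OF chW] ch_nn[OF chV])
    then show ?thesis by (simp add: case_prod_unfold)
  qed
  ultimately have "infsum A UNIV + infsum (G False) UNIV + infsum (G True) UNIV = sym_cap W + sym_cap V"
    using pw has_sum_unique by (metis (no_types, lifting) ext mult_1_left mult_1_right)
  then show ?thesis using capM capP by simp
qed

end


lemma LR_Suc: "fst (LR W (Suc n)) = chan_minus (fst (LR W n)) (snd (LR W n))"
  "snd (LR W (Suc n)) = chan_plus (fst (LR W n)) (snd (LR W n))"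
  by (simp_all add: case_prod_unfold)

declare LR.simps(2)[simp del]

theorem proposition1:
  fixes W :: "'y channel"
  assumes "is_channel W"
  shows "\<exists>IL IR.
     (\<lambda>n. sym_cap (fst (LR W n))) \<longlonglongrightarrow> IL \<and>
     (\<lambda>n. sym_cap (snd (LR W n))) \<longlonglongrightarrow> IR \<and>
     (sym_cap W \<ge> 1/2 \<longrightarrow> IL = 2 * sym_cap W - 1 \<and> IR = 1) \<and>
     (sym_cap W \<le> 1/2 \<longrightarrow> IL = 0 \<and> IR = 2 * sym_cap W)"
proof -
  define I where "I = sym_cap W"
  define Lf where "Lf n = sym_cap (fst (LR W n))" for n
  define Rf where "Rf n = sym_cap (snd (LR W n))" for n
  define z where "z n = Zc (snd (LR W n))" for n
  define zl where "zl n = Zc (fst (LR W n))" for n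
  define c :: real where "c = 2 / ln 2"
  have c_pos: "c > 0" by (simp add: c_def)
  have ch: "is_channel (fst (LR W n)) \<and> is_channel (snd (LR W n))" for n
  proof (induction n)
    case 0 then show ?case using lift_channel[OF assms] by simp
  next
    case (Suc n) then show ?case using minus_channel plus_channel by (simp add: LR_Suc) blast
  qed
  have sum: "Lf n + Rf n = 2 * I" for n
  proof (induction n)
    case 0 then show ?case using lift_cap[OF assms] by (simp add: Lf_def Rf_def I_def)
  next
    case (Suc n) then show ?case using chain_rule[of "fst (LR W n)" "snd (LR W n)"] ch[of n]
      by (simp add: LR_Suc Lf_def Rf_def)
  qed
  have zrec: "z (Suc n) = zl n * z n" for n
    using Z_plus[of "fst (LR W n)" "snd (LR W n)"] ch[of n] by (simp add: LR_Suc z_def zl_def)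
  have bL: "0 \<le> Lf n" "Lf n \<le> 1" "0 \<le> zl n" "zl n \<le> 1" "Lf n \<le> c * (1 - zl n)" for n
    using cap_bounds[of "fst (LR W n)"] ch[of n] by (auto simp: Lf_def zl_def c_def)
  have bR: "0 \<le> Rf n" "Rf n \<le> 1" "0 \<le> z n" "z n \<le> 1" "1 - Rf n \<le> c * z n" for n
    using cap_bounds[of "snd (LR W n)"] ch[of n] by (auto simp: Rf_def z_def c_def)
  have "decseq z" unfolding decseq_Suc_iff
  proof
    fix n show "z (Suc n) \<le> z n" using zrec[of n] bL(3,4)[of n] bR(3)[of n]
      by (simp add: mult_left_le_one_le)
  qed
  then obtain d where zd: "z \<longlonglongrightarrow> d" and dle: "\<forall>i. d \<le> z i"
    using decseq_convergent[of z 0] bR(3) by blast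
  have d0: "d \<ge> 0" using LIMSEQ_le_const[OF zd] bR(3) by blast
  have IL0: "IL \<ge> 0" if "Lf \<longlonglongrightarrow> IL" for IL using LIMSEQ_le_const[OF that] bL(1) by blast
  have IR1: "IR \<le> 1" if "Rf \<longlonglongrightarrow> IR" for IR using LIMSEQ_le_const2[OF that] bR(2) by blast
  show ?thesis
  proof (cases "d = 0")
    case True
    have "Rf \<longlonglongrightarrow> 1"
    proof (rule tendsto_sandwich[where f="\<lambda>n. 1 - c * z n" and h="\<lambda>n. 1"])
      show "\<forall>\<^sub>F n in sequentially. 1 - c * z n \<le> Rf n" using bR(5) by (auto simp: algebra_simps)
      show "\<forall>\<^sub>F n in sequentially. Rf n \<le> 1" using bR(2) by auto
      have "(\<lambda>n. 1 - c * z n) \<longlonglongrightarrow> 1 - c * 0" using zd True by (intro tendsto_intros) auto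
      then show "(\<lambda>n. 1 - c * z n) \<longlonglongrightarrow> 1" by simp
    qed simp
    moreover have "Lf \<longlonglongrightarrow> 2 * I - 1"
    proof -
      have "(\<lambda>n. 2 * I - Rf n) \<longlonglongrightarrow> 2 * I - 1" using \<open>Rf \<longlonglongrightarrow> 1\<close> by (intro tendsto_intros)
      moreover have "(\<lambda>n. 2 * I - Rf n) = Lf" using sum by (auto simp: fun_eq_iff algebra_simps)
      ultimately show ?thesis by simp
    qed
    moreover have "2 * I - 1 \<ge> 0" using IL0 calculation(2) .
    ultimately show ?thesis unfolding Lf_def[symmetric] Rf_def[symmetric] I_def[symmetric]
      by (intro exI[of _ "2 * I - 1"] exI[of _ 1]) auto
  next
    case False
    then have dpos: "d > 0" using d0 by simp
    have "zl \<longlonglongrightarrow> d / d"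
    proof -
      have "(\<lambda>n. z (Suc n) / z n) \<longlonglongrightarrow> d / d" using LIMSEQ_Suc[OF zd] zd dpos
        by (intro tendsto_intros) auto
      moreover have "(\<lambda>n. z (Suc n) / z n) = zl" 
      proof
        fix n have "z n > 0" using dle dpos by (meson less_le_trans)
        then show "z (Suc n) / z n = zl n" using zrec[of n] by simp
      qed
      ultimately show ?thesis by simp
    qed
    then have zl1: "zl \<longlonglongrightarrow> 1" using dpos by simp
    have "Lf \<longlonglongrightarrow> 0"
    proof (rule tendsto_sandwich[where f="\<lambda>n. 0" and h="\<lambda>n. c * (1 - zl n)"])
      show "\<forall>\<^sub>F n in sequentially. 0 \<le> Lf n" using bL(1) by auto
      show "\<forall>\<^sub>F n in sequentially. Lf n \<le> c * (1 - zl n)" using bL(5) by auto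
      have "(\<lambda>n. c * (1 - zl n)) \<longlonglongrightarrow> c * (1 - 1)" using zl1 by (intro tendsto_intros)
      then show "(\<lambda>n. c * (1 - zl n)) \<longlonglongrightarrow> 0" by simp
    qed simp
    moreover have "Rf \<longlonglongrightarrow> 2 * I"
    proof -
      have "(\<lambda>n. 2 * I - Lf n) \<longlonglongrightarrow> 2 * I - 0" using \<open>Lf \<longlonglongrightarrow> 0\<close> by (intro tendsto_intros)
      moreover have "(\<lambda>n. 2 * I - Lf n) = Rf" using sum by (auto simp: fun_eq_iff algebra_simps)
      ultimately show ?thesis by simp
    qed
    moreover have "2 * I \<le> 1" using IR1 calculation(2) .
    ultimately show ?thesis unfolding Lf_def[symmetric] Rf_def[symmetric] I_def[symmetric]
      by (intro exI[of _ 0] exI[of _ "2 * I"]) auto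
  qed
qed


end
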